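(* Let $d\ge 0$ be an integer. Then: (1) $f(1,d)=\frac{2}{d+2}$ if $d$ is even, and $f(1,d)=\frac{2(d+2)}{(d+1)(d+3)}$ if $d$ is odd. (2) The value $f(1,d)$ equals $\frac{\alpha_1(G)}{n(G)}$ for $G=J_{d+2}$ when $d$ is even, and for $G=(d+3)J_{d+1}\cup(d+1)J_{d+3}$ (disjoint union of $d+3$ copies of $J_{d+1}$ and $d+1$ copies of $J_{d+3}$) when $d$ is odd; these graphs have average degree at most $d$. (3) $f(1,d)\ge \frac{2}{d+2}$. (4) For every finite simple graph $G$ on $n\ge 1$ vertices, $\alpha_1(G)\ge \frac{2n}{\lceil d(G)\rceil+2}$.
   Context: For a graph $G=(V,E)$ and an integer $k\ge 0$, a $k$-independent set is a set $S\subseteq V$ such that the induced subgraph $G[S]$ has maximum degree at most $k$; $\alpha_k(G)$ denotes the maximum cardinality of a $k$-independent set of $G$. $n(G)$ is the number of vertices and $d(G)=2|E(G)|/n(G)$ the average degree. For integers $d,k\ge 0$, $f(k,d)=\inf\left\{\frac{\alpha_k(G)}{n(G)} : G \text{ a finite simple graph with at least one vertex and } d(G)\le d\right\}$. For an even integer $m\ge 2$, $J_m$ denotes the complete graph $K_m$ with the edges of a perfect matching removed. *)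

theory Defs
  imports Complex_Main
begin

definition simple_graph :: "'a set \<Rightarrow> 'a set set \<Rightarrow> bool" where
  "simple_graph V E \<longleftrightarrow> finite V \<and> (\<forall>e\<in>E. e \<subseteq> V \<and> card e = 2)"

definition k_independent :: "nat \<Rightarrow> 'a set \<Rightarrow> 'a set set \<Rightarrow> 'a set \<Rightarrow> bool" where
  "k_independent k V E S \<longleftrightarrow> S \<subseteq> V \<and> (\<forall>u\<in>S. card {v\<in>S. {u, v} \<in> E} \<le> k)"

definition alpha_k :: "nat \<Rightarrow> 'a set \<Rightarrow> 'a set set \<Rightarrow> nat" where
  "alpha_k k V E = Max {card S | S. k_independent k V E S}"

definition avg_deg :: "'a set \<Rightarrow> 'a set set \<Rightarrow> real" where
  "avg_deg V E = 2 * real (card E) / real (card V)"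

text \<open>f(k,d): infimum over all finite simple graphs (every finite graph is isomorphic
  to one with vertices in nat, so we range over graphs with natural-number vertices).\<close>
definition f_kd :: "nat \<Rightarrow> nat \<Rightarrow> real" where
  "f_kd k d = Inf {real (alpha_k k V E) / real (card V) | (V :: nat set) (E :: nat set set).
       simple_graph V E \<and> V \<noteq> {} \<and> avg_deg V E \<le> real d}"

text \<open>J_m: K_m on {0..<m} minus the perfect matching {2t, 2t+1}.\<close>
definition J_verts :: "nat \<Rightarrow> nat set" where
  "J_verts m = {0..<m}"

definition J_edges :: "nat \<Rightarrow> nat set set" where
  "J_edges m = {{i, j} | i j. i < m \<and> j < m \<and> i \<noteq> j \<and> i div 2 \<noteq> j div 2}"

definition copies_V :: "nat \<Rightarrow> 'a set \<Rightarrow> (nat \<times> 'a) set" where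
  "copies_V c V = {0..<c} \<times> V"

definition copies_E :: "nat \<Rightarrow> 'a set set \<Rightarrow> (nat \<times> 'a) set set" where
  "copies_E c E = {(\<lambda>x. (a, x)) ` e | a e. a < c \<and> e \<in> E}"

definition dunion_V :: "'a set \<Rightarrow> 'b set \<Rightarrow> ('a + 'b) set" where
  "dunion_V V1 V2 = Inl ` V1 \<union> Inr ` V2"

definition dunion_E :: "'a set set \<Rightarrow> 'b set set \<Rightarrow> ('a + 'b) set set" where
  "dunion_E E1 E2 = (image Inl) ` E1 \<union> (image Inr) ` E2"

definition Godd_V :: "nat \<Rightarrow> ((nat \<times> nat) + (nat \<times> nat)) set" where
  "Godd_V d = dunion_V (copies_V (d+3) (J_verts (d+1))) (copies_V (d+1) (J_verts (d+3)))"

definition Godd_E :: "nat \<Rightarrow> ((nat \<times> nat) + (nat \<times> nat)) set set" where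
  "Godd_E d = dunion_E (copies_E (d+3) (J_edges (d+1))) (copies_E (d+1) (J_edges (d+3)))"

end

theory Submission
  imports Defs "HOL-Library.Countable"
begin


definition nbr :: "'a set set \<Rightarrow> 'a \<Rightarrow> 'a set" where
  "nbr E v = {w. {v,w} \<in> E}"

lemma sg_finite: "simple_graph V E \<Longrightarrow> finite V"
  by (simp add: simple_graph_def)

lemma sg_edge: "simple_graph V E \<Longrightarrow> e \<in> E \<Longrightarrow> e \<subseteq> V \<and> card e = 2"
  by (simp add: simple_graph_def)

lemma sg_finE: "simple_graph V E \<Longrightarrow> finite E"
proof -
  assume a: "simple_graph V E"
  have "E \<subseteq> Pow V" using a by (auto simp: simple_graph_def)
  thus ?thesis using a by (meson finite_Pow_iff finite_subset sg_finite)
qed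

lemma nbr_sub: "simple_graph V E \<Longrightarrow> nbr E v \<subseteq> V"
  unfolding nbr_def simple_graph_def by blast

lemma nbr_irrefl: "simple_graph V E \<Longrightarrow> v \<notin> nbr E v"
  unfolding nbr_def simple_graph_def by force

lemma nbr_sym: "w \<in> nbr E v \<longleftrightarrow> v \<in> nbr E w"
  unfolding nbr_def by (simp add: insert_commute)

lemma deg_nbr: assumes "simple_graph V E"
  shows "card {e\<in>E. v \<in> e} = card (nbr E v)"
proof -
  have "bij_betw (\<lambda>w. {v,w}) (nbr E v) {e\<in>E. v \<in> e}"
  proof (rule bij_betwI')
    fix x y assume "x \<in> nbr E v" "y \<in> nbr E v"
    show "({v, x} = {v, y}) = (x = y)" by (metis doubleton_eq_iff)
  next
    fix x assume "x \<in> nbr E v" thus "{v, x} \<in> {e \<in> E. v \<in> e}" by (simp add: nbr_def)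
  next
    fix e assume e: "e \<in> {e \<in> E. v \<in> e}"
    then have "card e = 2" using sg_edge[OF assms] by auto
    then obtain a b where ab: "e = {a,b}" "a \<noteq> b" by (meson card_2_iff)
    show "\<exists>x\<in>nbr E v. e = {v, x}"
    proof (cases "a = v")
      case True thus ?thesis using e ab by (auto simp: nbr_def)
    next
      case False then have "b = v" using e ab by auto
      thus ?thesis using e ab by (auto simp: nbr_def insert_commute)
    qed
  qed
  thus ?thesis by (simp add: bij_betw_same_card)
qed

lemma indep_card_le: "simple_graph V E \<Longrightarrow> k_independent k V E S \<Longrightarrow> card S \<le> card V"
  by (simp add: card_mono k_independent_def sg_finite)

lemma alpha_ge: assumes "simple_graph V E" "k_independent k V E S"
  shows "card S \<le> alpha_k k V E"
proof -
  have "{card S | S. k_independent k V E S} \<subseteq> {..card V}"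
    using indep_card_le[OF assms(1)] by auto
  hence "finite {card S | S. k_independent k V E S}" using finite_subset by blast
  thus ?thesis unfolding alpha_k_def using assms(2) by (intro Max_ge) auto
qed

lemma alpha_ex: assumes "simple_graph V E"
  shows "\<exists>S. k_independent k V E S \<and> card S = alpha_k k V E"
proof -
  have "{card S | S. k_independent k V E S} \<subseteq> {..card V}"
    using indep_card_le[OF assms(1)] by auto
  hence f: "finite {card S | S. k_independent k V E S}" using finite_subset by blast
  have "k_independent k V E {}" by (simp add: k_independent_def)
  hence ne: "{card S | S. k_independent k V E S} \<noteq> {}" by blast
  have "alpha_k k V E \<in> {card S | S. k_independent k V E S}"
    unfolding alpha_k_def using Max_in[OF f ne] .
  thus ?thesis by auto
qed

lemma indep1_iff: "simple_graph V E \<Longrightarrow> k_independent k V E S \<longleftrightarrow> S \<subseteq> V \<and> (\<forall>u\<in>S. card (nbr E u \<inter> S) \<le> k)"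
  unfolding k_independent_def nbr_def by (simp add: Int_def conj_commute)



definition mono_pairs :: "'a set \<Rightarrow> 'a set set \<Rightarrow> ('a \<Rightarrow> nat) \<Rightarrow> ('a \<times> 'a) set" where
  "mono_pairs V E c = {(x,y). x\<in>V \<and> y\<in>V \<and> {x,y}\<in>E \<and> c x = c y}"

lemma mono_pairs_fin: "simple_graph V E \<Longrightarrow> finite (mono_pairs V E c)"
proof -
  assume a: "simple_graph V E"
  have "mono_pairs V E c \<subseteq> V \<times> V" unfolding mono_pairs_def by auto
  thus ?thesis using a sg_finite finite_subset by blast
qed

lemma cost_split:
  assumes sg: "simple_graph V E" and u: "u \<in> V"
  shows "card (mono_pairs V E c) = card {p\<in>mono_pairs V E c. fst p \<noteq> u \<and> snd p \<noteq> u}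
          + 2 * card {w\<in>nbr E u. c w = c u}"
proof -
  let ?N = "{w\<in>nbr E u. c w = c u}"
  let ?X = "{p\<in>mono_pairs V E c. fst p \<noteq> u \<and> snd p \<noteq> u}"
  have fN: "finite ?N" using nbr_sub[OF sg] sg_finite[OF sg] finite_subset by (metis (no_types, lifting) mem_Collect_eq subsetI)
  have uN: "u \<notin> ?N" using nbr_irrefl[OF sg] by auto
  have eq: "mono_pairs V E c = ?X \<union> (Pair u ` ?N \<union> (\<lambda>w. (w,u)) ` ?N)"
  proof (rule set_eqI)
    fix p show "p \<in> mono_pairs V E c \<longleftrightarrow> p \<in> ?X \<union> (Pair u ` ?N \<union> (\<lambda>w. (w,u)) ` ?N)"
    proof (cases p)
      case (Pair x y)
      have "x\<in>V" if "{x,y}\<in>E" using that sg_edge[OF sg] by auto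
      moreover have "y\<in>V" if "{x,y}\<in>E" using that sg_edge[OF sg] by auto
      ultimately show ?thesis using Pair u nbr_sub[OF sg]
        by (auto simp: mono_pairs_def nbr_def insert_commute)
    qed
  qed
  have d1: "?X \<inter> (Pair u ` ?N \<union> (\<lambda>w. (w,u)) ` ?N) = {}" by auto
  have d2: "Pair u ` ?N \<inter> (\<lambda>w. (w,u)) ` ?N = {}" using uN by auto
  have fX: "finite ?X" using mono_pairs_fin[OF sg] by simp
  have "card (mono_pairs V E c) = card ?X + card (Pair u ` ?N \<union> (\<lambda>w. (w,u)) ` ?N)"
    using eq d1 fX fN by (metis (no_types, lifting) card_Un_disjoint finite_UnI finite_imageI)
  also have "card (Pair u ` ?N \<union> (\<lambda>w. (w,u)) ` ?N) = card (Pair u ` ?N) + card ((\<lambda>w. (w,u)) ` ?N)"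
    using d2 fN by (simp add: card_Un_disjoint)
  also have "card (Pair u ` ?N) = card ?N" by (simp add: card_image inj_on_def)
  also have "card ((\<lambda>w. (w,u)) ` ?N) = card ?N" by (simp add: card_image inj_on_def)
  finally show ?thesis by simp
qed

lemma lovasz:
  assumes sg: "simple_graph V E" and t: "t \<ge> 1" and deg: "\<forall>v\<in>V. card (nbr E v) < 2*t"
  shows "\<exists>S. k_independent 1 V E S \<and> card V \<le> t * card S"
proof -
  define P where "P c \<longleftrightarrow> (\<forall>v\<in>V. c v < t)" for c :: "'a \<Rightarrow> nat"
  have "P (\<lambda>_. 0)" using t by (simp add: P_def)
  then obtain c where Pc: "P c" and cmin: "\<And>c'. P c' \<Longrightarrow> card (mono_pairs V E c) \<le> card (mono_pairs V E c')"
    using ex_has_least_nat[where P=P and m="\<lambda>c. card (mono_pairs V E c)"] by blast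
  have good: "card (nbr E u \<inter> {w. c w = c u}) \<le> 1" if uV: "u \<in> V" for u
  proof (rule ccontr)
    assume "\<not> ?thesis"
    hence big: "card {w\<in>nbr E u. c w = c u} \<ge> 2" by (simp add: Int_def)
    have fNu: "finite (nbr E u)" using nbr_sub[OF sg] sg_finite[OF sg] finite_subset by blast
    have "\<exists>k'<t. card {w\<in>nbr E u. c w = k'} \<le> 1"
    proof (rule ccontr)
      assume "\<not> ?thesis"
      hence all2: "\<forall>k'<t. card {w\<in>nbr E u. c w = k'} \<ge> 2" by auto
      have Ueq: "nbr E u = (\<Union>k'\<in>{..<t}. {w\<in>nbr E u. c w = k'})"
        using nbr_sub[OF sg] Pc unfolding P_def by auto
      have "card (nbr E u) = (\<Sum>k'\<in>{..<t}. card {w\<in>nbr E u. c w = k'})"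
        by (subst Ueq, rule card_UN_disjoint) (use fNu in auto)
      also have "\<dots> \<ge> (\<Sum>k'\<in>{..<t}. 2)" using all2 by (intro sum_mono) auto
      finally have "card (nbr E u) \<ge> 2 * t" by simp
      thus False using deg uV by force
    qed
    then obtain k' where k't: "k' < t" and k'c: "card {w\<in>nbr E u. c w = k'} \<le> 1" by blast
    define c' where "c' = c(u := k')"
    have Pc': "P c'" using Pc k't by (simp add: P_def c'_def)
    have X: "{p\<in>mono_pairs V E c'. fst p \<noteq> u \<and> snd p \<noteq> u} = {p\<in>mono_pairs V E c. fst p \<noteq> u \<and> snd p \<noteq> u}"
      by (auto simp: mono_pairs_def c'_def)
    have N: "{w\<in>nbr E u. c' w = c' u} = {w\<in>nbr E u. c w = k'}"
      using nbr_irrefl[OF sg, of u] by (auto simp: c'_def)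
    have "card (mono_pairs V E c') < card (mono_pairs V E c)"
      using cost_split[OF sg uV, of c'] cost_split[OF sg uV, of c] X N big k'c by simp
    thus False using cmin[OF Pc'] by simp
  qed
  define C where "C k = {v\<in>V. c v = k}" for k
  have indC: "k_independent 1 V E (C k)" for k
  proof -
    have "card (nbr E u \<inter> C k) \<le> 1" if "u \<in> C k" for u
    proof -
      have "nbr E u \<inter> C k \<subseteq> nbr E u \<inter> {w. c w = c u}" using that by (auto simp: C_def)
      moreover have "finite (nbr E u)" using nbr_sub[OF sg] sg_finite[OF sg] finite_subset by blast
      ultimately have "card (nbr E u \<inter> C k) \<le> card (nbr E u \<inter> {w. c w = c u})"
        by (simp add: card_mono)
      thus ?thesis using good[of u] that by (simp add: C_def)
    qed
    thus ?thesis using indep1_iff[OF sg] by (auto simp: C_def)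
  qed
  define f where "f k = card (C k)" for k
  have fin: "finite (f ` {..<t})" by simp
  have ne: "f ` {..<t} \<noteq> {}" using t by (auto simp: lessThan_empty_iff)
  obtain k0 where k0: "k0 < t" "f k0 = Max (f ` {..<t})" using Max_in[OF fin ne] by auto
  have k0max: "f k \<le> f k0" if "k < t" for k using Max_ge[OF fin] that k0 by auto
  have Veq: "V = (\<Union>k\<in>{..<t}. C k)" using Pc by (auto simp: P_def C_def)
  have "card V \<le> (\<Sum>k\<in>{..<t}. card (C k))"
    by (subst Veq, rule card_UN_le) simp
  also have "\<dots> \<le> (\<Sum>k\<in>{..<t}. f k0)" using k0max by (intro sum_mono) (auto simp: f_def)
  finally have "card V \<le> t * card (C k0)" by (simp add: f_def)
  thus ?thesis using indC by blast
qed



lemma del_sg: "simple_graph V E \<Longrightarrow> simple_graph (V - {v}) {e\<in>E. v \<notin> e}"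
  unfolding simple_graph_def by auto

lemma del_card_E: assumes sg: "simple_graph V E"
  shows "card E = card {e\<in>E. v \<notin> e} + card (nbr E v)"
proof -
  have "E = {e\<in>E. v \<notin> e} \<union> {e\<in>E. v \<in> e}" by auto
  moreover have "finite E" using sg_finE[OF sg] .
  ultimately have "card E = card {e\<in>E. v \<notin> e} + card {e\<in>E. v \<in> e}"
    by (metis (no_types, lifting) card_Un_disjoint disjoint_iff finite_Un mem_Collect_eq)
  thus ?thesis using deg_nbr[OF sg] by simp
qed

lemma del_alpha: assumes sg: "simple_graph V E"
  shows "alpha_k 1 (V - {v}) {e\<in>E. v \<notin> e} \<le> alpha_k 1 V E"
proof -
  obtain S where S: "k_independent 1 (V - {v}) {e\<in>E. v \<notin> e} S" "card S = alpha_k 1 (V - {v}) {e\<in>E. v \<notin> e}"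
    using alpha_ex[OF del_sg[OF sg]] by blast
  have vS: "v \<notin> S" using S(1) by (auto simp: k_independent_def)
  have "k_independent 1 V E S"
  proof -
    have "{w\<in>S. {u,w} \<in> E} = {w\<in>S. {u,w} \<in> {e\<in>E. v \<notin> e}}" if "u \<in> S" for u
      using vS that by auto
    thus ?thesis using S(1) by (auto simp: k_independent_def)
  qed
  thus ?thesis using alpha_ge[OF sg] S(2) by metis
qed

lemma sg_empty: "simple_graph {} E \<Longrightarrow> E = {}"
  unfolding simple_graph_def by fastforce

lemma key:
  assumes "simple_graph V E"
  shows "2*(i+1)*card V \<le> (i+1)*(i+2)*alpha_k 1 V E + card E"
  using assms
proof (induction "card V" arbitrary: V E i rule: less_induct)
  case less
  note sg = less.prems
  have step: "2*(i+1)*card V \<le> (i+1)*(i+2)*alpha_k 1 V E + card E"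
    if IHi: "i > 0 \<Longrightarrow> 2*((i-1)+1)*card V \<le> ((i-1)+1)*((i-1)+2)*alpha_k 1 V E + card E" for i
  proof (cases "V = {}")
    case True thus ?thesis by simp
  next
    case False
    have fV: "finite V" using sg_finite[OF sg] .
    define dg where "dg w = card (nbr E w)" for w
    have fin: "finite (dg ` V)" using fV by simp
    have ne: "dg ` V \<noteq> {}" using False by simp
    obtain v where vV: "v \<in> V" and vmax: "dg v = Max (dg ` V)" using Max_in[OF fin ne] by auto
    have vmax': "dg w \<le> dg v" if "w \<in> V" for w using Max_ge[OF fin] that vmax by auto
    show ?thesis
    proof (cases "dg v \<ge> 2*i+2")
      case True
      let ?V = "V - {v}" and ?E = "{e\<in>E. v \<notin> e}"
      have cV: "card ?V < card V" using vV fV by (meson card_Diff1_less)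
      have IH: "2*(i+1)*card ?V \<le> (i+1)*(i+2)*alpha_k 1 ?V ?E + card ?E"
        using less.hyps[OF cV del_sg[OF sg]] by blast
      have cV2: "card V = card ?V + 1" using vV fV card_Suc_Diff1 by fastforce
      have cE: "card E = card ?E + dg v" using del_card_E[OF sg] dg_def by simp
      have al: "alpha_k 1 ?V ?E \<le> alpha_k 1 V E" using del_alpha[OF sg] .
      have "(i+1)*(i+2)*alpha_k 1 ?V ?E \<le> (i+1)*(i+2)*alpha_k 1 V E" using al by (rule mult_le_mono2)
      thus ?thesis using IH cV2 cE True by (simp add: algebra_simps)
    next
      case False
      hence dgb: "\<forall>w\<in>V. card (nbr E w) < 2*(i+1)" using vmax' by (auto simp: dg_def) (meson le_trans not_le)
      show ?thesis
      proof (cases "i * card V \<le> card E")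
        case True
        obtain S where S: "k_independent 1 V E S" "card V \<le> (i+1) * card S"
          using lovasz[OF sg _ dgb] by auto
        have "card S \<le> alpha_k 1 V E" using alpha_ge[OF sg S(1)] .
        hence "card V \<le> (i+1) * alpha_k 1 V E" using S(2) by (meson le_trans mult_le_mono2)
        hence "(i+2)*card V \<le> (i+1)*(i+2)*alpha_k 1 V E" by (metis mult.commute mult.left_commute mult_le_mono2)
        thus ?thesis using True by (simp add: algebra_simps)
      next
        case False
        hence ip: "i > 0" by (cases i) auto
        have h: "2*i*card V \<le> i*(i+1)*alpha_k 1 V E + card E" using IHi[OF ip] ip by simp
        define a where "a = alpha_k 1 V E"
        define n where "n = card V"
        define m where "m = card E"
        have h': "2*i*n \<le> i*(i+1)*a + m" and mn: "m < i*n" using h False by (simp_all add: a_def n_def m_def)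
        have "i*(2*(i+1)*n) \<le> i*((i+1)*(i+2)*a + m)"
        proof -
          have h2: "(i+2)*(2*i*n) \<le> (i+2)*(i*(i+1)*a + m)" using h' by (rule mult_le_mono2)
          define X where "X = i*(i+1)*(i+2)*a"
          have e1: "(i+2)*(2*i*n) = 2*(i*i*n) + 4*(i*n)" by (simp add: algebra_simps)
          have e2: "(i+2)*(i*(i+1)*a + m) = X + i*m + 2*m" by (simp add: X_def algebra_simps)
          have e3: "i*(2*(i+1)*n) = 2*(i*i*n) + 2*(i*n)" by (simp add: algebra_simps)
          have e4: "i*((i+1)*(i+2)*a + m) = X + i*m" by (simp add: X_def algebra_simps)
          have "2*(i*i*n) + 4*(i*n) \<le> X + i*m + 2*m" using h2 by (simp only: e1 e2)
          hence "2*(i*i*n) + 2*(i*n) \<le> X + i*m" using mn by linarith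
          thus ?thesis by (simp only: e3 e4)
        qed
        hence "2*(i+1)*n \<le> (i+1)*(i+2)*a + m" using ip by simp
        thus ?thesis by (simp add: a_def n_def m_def)
      qed
    qed
  qed
  have "\<forall>i. 2*(i+1)*card V \<le> (i+1)*(i+2)*alpha_k 1 V E + card E"
  proof
    fix i show "2*(i+1)*card V \<le> (i+1)*(i+2)*alpha_k 1 V E + card E"
    proof (induction i)
      case 0 show ?case by (rule step) simp
    next
      case (Suc j) show ?case by (rule step) (use Suc in simp)
    qed
  qed
  thus ?case by blast
qed



lemma handshake: assumes sg: "simple_graph V E"
  shows "(\<Sum>v\<in>V. card (nbr E v)) = 2 * card E"
proof -
  have fV: "finite V" and fE: "finite E" using sg_finite[OF sg] sg_finE[OF sg] by auto
  have "(\<Sum>v\<in>V. card (nbr E v)) = (\<Sum>v\<in>V. card {e\<in>E. v \<in> e})" using deg_nbr[OF sg] by simp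
  also have "\<dots> = (\<Sum>v\<in>V. \<Sum>e\<in>E. if v \<in> e then 1 else 0)"
    using fE sum.inter_filter[of E "\<lambda>_. 1::nat"] by simp
  also have "\<dots> = (\<Sum>e\<in>E. \<Sum>v\<in>V. if v \<in> e then 1 else 0)" by (rule sum.swap)
  also have "\<dots> = (\<Sum>e\<in>E. card {v\<in>V. v \<in> e})" using fV sum.inter_filter[of V "\<lambda>_. 1::nat"] by simp
  also have "\<dots> = (\<Sum>e\<in>E. 2)"
  proof (rule sum.cong)
    fix e assume "e \<in> E"
    hence "{v\<in>V. v \<in> e} = e" "card e = 2" using sg_edge[OF sg] by auto
    thus "card {v\<in>V. v \<in> e} = 2" by simp
  qed simp
  finally show ?thesis by simp
qed


lemma tri_key:
  assumes sg: "simple_graph V E" and S: "k_independent 1 V E S"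
    and adj: "\<And>x y. x \<in> B \<Longrightarrow> y \<in> B \<Longrightarrow> x \<noteq> y \<Longrightarrow> g x \<noteq> g y \<Longrightarrow> {x,y} \<in> E"
    and no3: "\<And>x y z. x \<in> B \<Longrightarrow> y \<in> B \<Longrightarrow> z \<in> B \<Longrightarrow> x \<noteq> y \<Longrightarrow> y \<noteq> z \<Longrightarrow> x \<noteq> z
               \<Longrightarrow> g x = g y \<Longrightarrow> g y = g z \<Longrightarrow> False"
  shows "card (S \<inter> B) \<le> 2"
proof (rule ccontr)
  assume "\<not> ?thesis"
  hence "3 \<le> card (S \<inter> B)" by simp
  then obtain T where T: "T \<subseteq> S \<inter> B" "card T = 3" by (meson obtain_subset_with_card_n)
  then obtain x y z where xyz: "T = {x,y,z}" "x \<noteq> y" "y \<noteq> z" "x \<noteq> z" by (auto simp: card_3_iff)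
  have fS: "finite S" using S sg_finite[OF sg] finite_subset by (auto simp: k_independent_def)
  have Sp: "\<forall>u\<in>S. card (nbr E u \<inter> S) \<le> 1" using S indep1_iff[OF sg] by blast
  have two: False if "w \<in> S" "u \<in> S" "u' \<in> S" "u \<noteq> u'" "{w,u} \<in> E" "{w,u'} \<in> E" for w u u'
  proof -
    have "{u,u'} \<subseteq> nbr E w \<inter> S" using that by (auto simp: nbr_def)
    hence "card {u,u'} \<le> card (nbr E w \<inter> S)" using fS by (intro card_mono) auto
    thus False using that Sp by auto
  qed
  have mem: "x \<in> S" "y \<in> S" "z \<in> S" "x \<in> B" "y \<in> B" "z \<in> B" using T xyz by auto
  show False
  proof (cases "g x = g y")
    case True
    hence "g z \<noteq> g x" using no3[of x y z] mem xyz by auto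
    thus False using two[of z x y] adj[of z x] adj[of z y] mem xyz True by auto
  next
    case False
    show False
    proof (cases "g z = g x")
      case True
      thus False using two[of y x z] adj[of y x] adj[of y z] mem xyz False by auto
    next
      case False2: False
      thus False using two[of x y z] adj[of x y] adj[of x z] mem xyz False by auto
    qed
  qed
qed


lemma transport:
  assumes sg: "simple_graph V E" and inj: "inj \<phi>"
  shows "simple_graph (\<phi> ` V) ((`) \<phi> ` E)" "card (\<phi> ` V) = card V"
    "card ((`) \<phi> ` E) = card E" "alpha_k 1 (\<phi> ` V) ((`) \<phi> ` E) \<le> alpha_k 1 V E"
proof -
  have ci: "card (\<phi> ` A) = card A" for A using inj by (meson card_image inj_on_subset subset_UNIV)
  have "finite (\<phi> ` V)" using sg_finite[OF sg] by simp
  moreover have "\<forall>e'\<in>(`) \<phi> ` E. e' \<subseteq> \<phi> ` V \<and> card e' = 2"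
  proof
    fix e' assume "e' \<in> (`) \<phi> ` E"
    then obtain e where "e \<in> E" "e' = \<phi> ` e" by blast
    thus "e' \<subseteq> \<phi> ` V \<and> card e' = 2" using sg_edge[OF sg, of e] ci[of e] by auto
  qed
  ultimately show sg': "simple_graph (\<phi> ` V) ((`) \<phi> ` E)" unfolding simple_graph_def by blast
  show "card (\<phi> ` V) = card V" by (rule ci)
  have "inj_on ((`) \<phi>) E" using inj by (simp add: inj_on_def inj_image_eq_iff)
  thus "card ((`) \<phi> ` E) = card E" by (simp add: card_image)
  obtain S' where S': "k_independent 1 (\<phi> ` V) ((`) \<phi> ` E) S'" "card S' = alpha_k 1 (\<phi> ` V) ((`) \<phi> ` E)"
    using alpha_ex[OF sg'] by blast
  define S where "S = {v\<in>V. \<phi> v \<in> S'}"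
  have S'sub: "S' \<subseteq> \<phi> ` V" using S'(1) by (simp add: k_independent_def)
  have SS': "\<phi> ` S = S'"
  proof
    show "\<phi> ` S \<subseteq> S'" by (auto simp: S_def)
    show "S' \<subseteq> \<phi> ` S"
    proof
      fix x assume x: "x \<in> S'"
      then obtain v where "v \<in> V" "x = \<phi> v" using S'sub by blast
      thus "x \<in> \<phi> ` S" using x by (auto simp: S_def)
    qed
  qed
  have cS: "card S = card S'" using SS' ci[of S] by simp
  have "k_independent 1 V E S"
  proof -
    have "card {w\<in>S. {u,w}\<in>E} \<le> 1" if u: "u \<in> S" for u
    proof -
      have sub: "\<phi> ` {w\<in>S. {u,w}\<in>E} \<subseteq> {w\<in>S'. {\<phi> u, w} \<in> (`) \<phi> ` E}"
      proof
        fix x assume "x \<in> \<phi> ` {w\<in>S. {u,w}\<in>E}"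
        then obtain w where w: "w \<in> S" "{u,w} \<in> E" "x = \<phi> w" by blast
        have "{\<phi> u, x} \<in> (`) \<phi> ` E" by (rule rev_image_eqI[OF w(2)]) (simp add: w(3))
        moreover have "x \<in> S'" using w by (simp add: S_def)
        ultimately show "x \<in> {w\<in>S'. {\<phi> u, w} \<in> (`) \<phi> ` E}" by simp
      qed
      have fin: "finite {w\<in>S'. {\<phi> u, w} \<in> (`) \<phi> ` E}"
        using finite_subset[OF _ sg_finite[OF sg'], of "{w\<in>S'. {\<phi> u, w} \<in> (`) \<phi> ` E}"] S'sub by blast
      have "card (\<phi> ` {w\<in>S. {u,w}\<in>E}) \<le> card {w\<in>S'. {\<phi> u, w} \<in> (`) \<phi> ` E}"
        using card_mono[OF fin sub] .
      moreover have "\<phi> u \<in> S'" using u by (simp add: S_def)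
      hence "card {w\<in>S'. {\<phi> u, w} \<in> (`) \<phi> ` E} \<le> 1" using S'(1) by (simp add: k_independent_def)
      ultimately show ?thesis using ci[of "{w\<in>S. {u,w}\<in>E}"] by linarith
    qed
    moreover have "S \<subseteq> V" by (auto simp: S_def)
    ultimately show ?thesis by (simp add: k_independent_def)
  qed
  hence "card S \<le> alpha_k 1 V E" by (rule alpha_ge[OF sg])
  thus "alpha_k 1 (\<phi> ` V) ((`) \<phi> ` E) \<le> alpha_k 1 V E" using cS S'(2) by linarith
qed

lemma bound_odd:
  assumes sg: "simple_graph V E" and m: "2 * card E \<le> (2*j+1) * card V"
  shows "(2*j+3) * card V \<le> 2*(j+1)*(j+2) * alpha_k 1 V E"
proof -
  have k: "2*(j+1)*card V \<le> (j+1)*(j+2)*alpha_k 1 V E + card E" using key[OF sg] .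
  define A where "A = (j+1)*(j+2)*alpha_k 1 V E"
  have "2*(2*(j+1)*card V) \<le> 2*A + 2*card E" using k by (simp add: A_def)
  moreover have "2*(2*(j+1)*card V) = (2*j+1) * card V + (2*j+3) * card V" by (simp add: algebra_simps)
  ultimately have "(2*j+3) * card V \<le> 2*A" using m by linarith
  thus ?thesis by (simp add: A_def algebra_simps)
qed


lemma bound_D:
  assumes sg: "simple_graph V E" and m: "2 * card E \<le> D * card V"
  shows "2 * card V \<le> (D+2) * alpha_k 1 V E"
proof (cases "even D")
  case True
  then obtain j where D: "D = 2*j" by auto
  have k: "2*(j+1)*card V \<le> (j+1)*(j+2)*alpha_k 1 V E + card E" using key[OF sg] .
  have "card E \<le> j * card V" using m D by simp
  hence "(j+2)*card V \<le> (j+2)*((j+1)*alpha_k 1 V E)" using k by (simp add: algebra_simps)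
  hence "0 < j+2 \<longrightarrow> card V \<le> (j+1)*alpha_k 1 V E" by (rule mult_le_cancel1[THEN iffD1])
  hence "card V \<le> (j+1)*alpha_k 1 V E" by simp
  thus ?thesis using D by simp
next
  case False
  then obtain j where D: "D = 2*j+1" using oddE by blast
  have b: "(2*j+3) * card V \<le> 2*(j+1)*(j+2) * alpha_k 1 V E" using bound_odd[OF sg] m D by simp
  define a where "a = alpha_k 1 V E"
  define n where "n = card V"
  define q where "q = (j+1)*(j+2)"
  have b': "(2*j+3) * n \<le> 2*q*a" using b by (simp add: a_def n_def q_def mult.assoc)
  have sq: "(2*j+3)*(2*j+3) = 4*q + 1" by (simp add: q_def algebra_simps)
  have "(2*q)*(2*n) \<le> (4*q+1)*n" by (simp add: algebra_simps)
  also have "\<dots> = (2*j+3)*((2*j+3)*n)" using sq by (simp add: mult.assoc[symmetric])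
  also have "\<dots> \<le> (2*j+3)*(2*q*a)" using b' by (rule mult_le_mono2)
  also have "\<dots> = (2*q)*((2*j+3)*a)" by (simp add: algebra_simps)
  finally have "(2*q)*(2*n) \<le> (2*q)*((2*j+3)*a)" .
  hence "0 < 2*q \<longrightarrow> 2*n \<le> (2*j+3)*a" by (rule mult_le_cancel1[THEN iffD1])
  moreover have "0 < 2*q" by (simp add: q_def)
  ultimately have "2*n \<le> (2*j+3)*a" by simp
  moreover have e: "D+2 = 2*j+3" using D by simp
  ultimately have "2*n \<le> (D+2)*a" by (simp only: e)
  thus ?thesis by (simp add: a_def n_def)
qed



lemma J_edge_iff: "{x,y} \<in> J_edges m \<longleftrightarrow> x<m \<and> y<m \<and> x\<noteq>y \<and> x div 2 \<noteq> y div 2"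
proof
  assume "{x,y} \<in> J_edges m"
  then obtain i j where "{x,y} = {i,j}" "i<m" "j<m" "i\<noteq>j" "i div 2 \<noteq> j div 2"
    unfolding J_edges_def by blast
  thus "x<m \<and> y<m \<and> x\<noteq>y \<and> x div 2 \<noteq> y div 2" by (auto simp: doubleton_eq_iff)
next
  assume "x<m \<and> y<m \<and> x\<noteq>y \<and> x div 2 \<noteq> y div 2"
  thus "{x,y} \<in> J_edges m" unfolding J_edges_def by blast
qed

lemma J_sg: "simple_graph (J_verts m) (J_edges m)"
  unfolding simple_graph_def J_verts_def J_edges_def by auto

lemma J_nbr: "nbr (J_edges m) x = {y. x<m \<and> y<m \<and> x\<noteq>y \<and> x div 2 \<noteq> y div 2}"
  by (auto simp: nbr_def J_edge_iff)

lemma J_deg: assumes "even m" "x < m" shows "card (nbr (J_edges m) x) \<le> m - 2"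
proof -
  define p where "p = (if even x then x+1 else x-1)"
  have pm: "p < m \<and> p \<noteq> x \<and> p div 2 = x div 2"
  proof (cases "even x")
    case True thus ?thesis using assms by (simp add: p_def) presburger
  next
    case False thus ?thesis using assms by (simp add: p_def) presburger
  qed
  have "nbr (J_edges m) x \<subseteq> {0..<m} - {x, p}" using pm by (auto simp: J_nbr)
  hence "card (nbr (J_edges m) x) \<le> card ({0..<m} - {x, p})" by (intro card_mono) auto
  also have "\<dots> = m - 2" using pm assms by (subst card_Diff_subset) auto
  finally show ?thesis .
qed

lemma no3_div2: assumes "(x::nat) \<noteq> y" "y \<noteq> z" "x \<noteq> z" "x div 2 = y div 2" "y div 2 = z div 2"
  shows False
proof -
  have x: "x = 2*(x div 2) + x mod 2" and y: "y = 2*(y div 2) + y mod 2" and z: "z = 2*(z div 2) + z mod 2"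
    by simp_all
  have "x mod 2 = 0 \<or> x mod 2 = 1" "y mod 2 = 0 \<or> y mod 2 = 1" "z mod 2 = 0 \<or> z mod 2 = 1"
    by (simp_all add: mod2_eq_if)
  thus False using x y z assms by auto
qed

lemma J_alpha: "alpha_k 1 (J_verts m) (J_edges m) \<le> 2"
proof -
  obtain S where S: "k_independent 1 (J_verts m) (J_edges m) S" "card S = alpha_k 1 (J_verts m) (J_edges m)"
    using alpha_ex[OF J_sg] by blast
  have "card (S \<inter> J_verts m) \<le> 2"
    by (rule tri_key[OF J_sg S(1), where g="\<lambda>x. x div 2"])
       (auto simp: J_edge_iff J_verts_def intro: no3_div2)
  moreover have "S \<inter> J_verts m = S" using S(1) by (auto simp: k_independent_def)
  ultimately show ?thesis using S(2) by simp
qed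



lemma J_E2: assumes "even m" shows "2 * card (J_edges m) \<le> m * (m-2)"
proof -
  have "2 * card (J_edges m) = (\<Sum>v\<in>J_verts m. card (nbr (J_edges m) v))" using handshake[OF J_sg] by simp
  also have "\<dots> \<le> (\<Sum>v\<in>J_verts m. m - 2)" using J_deg[OF assms] by (intro sum_mono) (auto simp: J_verts_def)
  also have "\<dots> = m * (m-2)" by (simp add: J_verts_def)
  finally show ?thesis .
qed

lemma copies_sg: assumes "simple_graph V E" shows "simple_graph (copies_V c V) (copies_E c E)"
  unfolding simple_graph_def
proof (rule conjI)
  show "finite (copies_V c V)" using sg_finite[OF assms] by (simp add: copies_V_def)
  show "\<forall>e'\<in>copies_E c E. e' \<subseteq> copies_V c V \<and> card e' = 2"
  proof
  fix e' assume "e' \<in> copies_E c E"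
  then obtain a e where ae: "e' = (\<lambda>x. (a, x)) ` e" "a < c" "e \<in> E" by (auto simp: copies_E_def)
  have "card e' = card e" using ae(1) by (simp add: card_image inj_on_def)
  thus "e' \<subseteq> copies_V c V \<and> card e' = 2" using ae sg_edge[OF assms ae(3)] by (auto simp: copies_V_def)
  qed
qed

lemma dunion_sg: assumes "simple_graph V1 E1" "simple_graph V2 E2"
  shows "simple_graph (dunion_V V1 V2) (dunion_E E1 E2)"
  unfolding simple_graph_def
proof (rule conjI)
  show "finite (dunion_V V1 V2)" using sg_finite[OF assms(1)] sg_finite[OF assms(2)] by (simp add: dunion_V_def)
  show "\<forall>e'\<in>dunion_E E1 E2. e' \<subseteq> dunion_V V1 V2 \<and> card e' = 2"
  proof
  fix e' assume "e' \<in> dunion_E E1 E2"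
  hence "(\<exists>e. e' = Inl ` e \<and> e \<in> E1) \<or> (\<exists>e. e' = Inr ` e \<and> e \<in> E2)"
    by (auto simp: dunion_E_def)
  thus "e' \<subseteq> dunion_V V1 V2 \<and> card e' = 2"
  proof
    assume "\<exists>e. e' = Inl ` e \<and> e \<in> E1"
    then obtain e where l: "e' = Inl ` e" "e \<in> E1" by blast
    thus ?thesis using sg_edge[OF assms(1) l(2)] by (auto simp: dunion_V_def card_image)
  next
    assume "\<exists>e. e' = Inr ` e \<and> e \<in> E2"
    then obtain e where r: "e' = Inr ` e" "e \<in> E2" by blast
    thus ?thesis using sg_edge[OF assms(2) r(2)] by (auto simp: dunion_V_def card_image)
  qed
  qed
qed

lemma copies_cardE: assumes "finite E" shows "card (copies_E c E) \<le> c * card E"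
proof -
  have eq: "copies_E c E = (\<Union>a\<in>{..<c}. (\<lambda>e. (\<lambda>x. (a, x)) ` e) ` E)" by (auto simp: copies_E_def)
  have "card (copies_E c E) \<le> (\<Sum>a\<in>{..<c}. card ((\<lambda>e. (\<lambda>x. (a, x)) ` e) ` E))"
    by (subst eq, rule card_UN_le) simp
  also have "\<dots> \<le> (\<Sum>a\<in>{..<c}. card E)" by (intro sum_mono card_image_le assms)
  finally show ?thesis by simp
qed

lemma dunion_cardE: assumes "finite E1" "finite E2" shows "card (dunion_E E1 E2) \<le> card E1 + card E2"
  unfolding dunion_E_def
  by (rule order_trans[OF card_Un_le add_mono[OF card_image_le card_image_le]]) (use assms in auto)

lemma copies_mem: "{(a,i),(b,j)} \<in> copies_E c E \<longleftrightarrow> a = b \<and> a < c \<and> {i,j} \<in> E"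
proof
  assume "{(a,i),(b,j)} \<in> copies_E c E"
  then obtain a' e where ae: "{(a,i),(b,j)} = (\<lambda>x. (a', x)) ` e" "a' < c" "e \<in> E" by (auto simp: copies_E_def)
  have "(a,i) \<in> (\<lambda>x. (a', x)) ` e" "(b,j) \<in> (\<lambda>x. (a', x)) ` e" unfolding ae(1)[symmetric] by simp_all
  hence "a = a'" "b = a'" by auto
  moreover have "snd ` {(a,i),(b,j)} = e" using ae(1) by (simp add: image_image)
  hence "e = {i,j}" by simp
  ultimately show "a = b \<and> a < c \<and> {i,j} \<in> E" using ae by simp
next
  assume "a = b \<and> a < c \<and> {i,j} \<in> E"
  moreover have "{(a,i),(a,j)} = (\<lambda>x. (a, x)) ` {i,j}" by simp
  ultimately show "{(a,i),(b,j)} \<in> copies_E c E" unfolding copies_E_def by blast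
qed

lemma dunion_mem_l:
  fixes E1 :: "'a set set" and E2 :: "'b set set"
  shows "{Inl p, Inl q} \<in> dunion_E E1 E2 \<longleftrightarrow> {p,q} \<in> E1"
proof -
  have eq: "{Inl p, Inl q} = (Inl :: 'a \<Rightarrow> 'a + 'b) ` {p,q}" by simp
  have inj: "inj ((`) (Inl :: 'a \<Rightarrow> 'a + 'b))" unfolding inj_def by (simp add: inj_image_eq_iff)
  have n: "(Inl :: 'a \<Rightarrow> 'a + 'b) ` {p,q} \<notin> (`) Inr ` E2" by auto
  show ?thesis unfolding dunion_E_def eq Un_iff using n inj_image_mem_iff[OF inj, of "{p,q}"] by blast
qed

lemma dunion_mem_r:
  fixes E1 :: "'a set set" and E2 :: "'b set set"
  shows "{Inr p, Inr q} \<in> dunion_E E1 E2 \<longleftrightarrow> {p,q} \<in> E2"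
proof -
  have eq: "{Inr p, Inr q} = (Inr :: 'b \<Rightarrow> 'a + 'b) ` {p,q}" by simp
  have inj: "inj ((`) (Inr :: 'b \<Rightarrow> 'a + 'b))" unfolding inj_def by (simp add: inj_image_eq_iff)
  have n: "(Inr :: 'b \<Rightarrow> 'a + 'b) ` {p,q} \<notin> (`) Inl ` E1" by auto
  show ?thesis unfolding dunion_E_def eq Un_iff using n inj_image_mem_iff[OF inj, of "{p,q}"] by blast
qed



lemma Godd_sg: "simple_graph (Godd_V d) (Godd_E d)"
  unfolding Godd_V_def Godd_E_def
  by (intro dunion_sg copies_sg J_sg)


lemma copies_cardV: "finite V \<Longrightarrow> card (copies_V c V) = c * card V"
  by (simp add: copies_V_def card_cartesian_product)


lemma dunion_cardV: "finite V1 \<Longrightarrow> finite V2 \<Longrightarrow> card (dunion_V V1 V2) = card V1 + card V2"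
  unfolding dunion_V_def by (subst card_Un_disjoint) (auto simp: card_image)


lemma Godd_cardV: "card (Godd_V d) = 2*(d+1)*(d+3)"
  unfolding Godd_V_def J_verts_def
  by (simp add: dunion_cardV copies_cardV copies_V_def algebra_simps)


lemma Godd_E2: assumes "odd d" shows "2*card (Godd_E d) \<le> d * card (Godd_V d)"
proof -
  obtain j where d: "d = 2*j+1" using assms oddE by blast
  have fJ: "finite (J_edges m)" for m using sg_finE[OF J_sg] .
  have "card (Godd_E d) \<le> card (copies_E (d+3) (J_edges (d+1))) + card (copies_E (d+1) (J_edges (d+3)))"
    unfolding Godd_E_def by (rule dunion_cardE) (simp_all add: fJ sg_finE[OF copies_sg[OF J_sg]])
  also have "\<dots> \<le> (d+3) * card (J_edges (d+1)) + (d+1) * card (J_edges (d+3))"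
    by (intro add_mono copies_cardE fJ)
  finally have "2*card (Godd_E d) \<le> (d+3) * (2*card (J_edges (d+1))) + (d+1) * (2*card (J_edges (d+3)))"
    by (simp add: algebra_simps)
  also have "\<dots> \<le> (d+3) * ((d+1)*(d+1-2)) + (d+1) * ((d+3)*(d+3-2))"
    using assms by (intro add_mono mult_le_mono2 J_E2) auto
  also have "\<dots> = d * (2*(d+1)*(d+3))" using d by (simp add: algebra_simps)
  finally show ?thesis by (simp add: Godd_cardV)
qed

definition gkey :: "((nat \<times> nat) + (nat \<times> nat)) \<Rightarrow> nat" where
  "gkey = case_sum (\<lambda>p. snd p div 2) (\<lambda>p. snd p div 2)"


lemma Godd_alpha: "alpha_k 1 (Godd_V d) (Godd_E d) \<le> 4*d+8"
proof -
  obtain S where S: "k_independent 1 (Godd_V d) (Godd_E d) S" "card S = alpha_k 1 (Godd_V d) (Godd_E d)"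
    using alpha_ex[OF Godd_sg] by blast
  define BL where "BL a = (Inl ` ({a} \<times> {0..<d+1}) :: ((nat \<times> nat) + (nat \<times> nat)) set)" for a :: nat
  define BR where "BR a = (Inr ` ({a} \<times> {0..<d+3}) :: ((nat \<times> nat) + (nat \<times> nat)) set)" for a :: nat
  have L: "card (S \<inter> BL a) \<le> 2" if "a < d+3" for a
  proof (rule tri_key[OF Godd_sg S(1), where g=gkey])
    fix x y assume xy: "x \<in> BL a" "y \<in> BL a" "x \<noteq> y" "gkey x \<noteq> gkey y"
    obtain i where i: "x = Inl (a,i)" "i < d+1" using xy(1) by (auto simp: BL_def)
    obtain j where j: "y = Inl (a,j)" "j < d+1" using xy(2) by (auto simp: BL_def)
    have "{i,j} \<in> J_edges (d+1)" using i j xy(3,4) by (simp add: J_edge_iff gkey_def)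
    hence "{(a,i),(a,j)} \<in> copies_E (d+3) (J_edges (d+1))" using that by (simp add: copies_mem)
    thus "{x,y} \<in> Godd_E d" unfolding Godd_E_def i(1) j(1) dunion_mem_l .
  next
    fix x y z assume xyz: "x \<in> BL a" "y \<in> BL a" "z \<in> BL a" "x \<noteq> y" "y \<noteq> z" "x \<noteq> z"
      "gkey x = gkey y" "gkey y = gkey z"
    obtain i where i: "x = Inl (a,i)" using xyz(1) by (auto simp: BL_def)
    obtain j where j: "y = Inl (a,j)" using xyz(2) by (auto simp: BL_def)
    obtain k where k: "z = Inl (a,k)" using xyz(3) by (auto simp: BL_def)
    show False using no3_div2[of i j k] xyz(4-8) i j k by (simp add: gkey_def)
  qed
  have R: "card (S \<inter> BR a) \<le> 2" if "a < d+1" for a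
  proof (rule tri_key[OF Godd_sg S(1), where g=gkey])
    fix x y assume xy: "x \<in> BR a" "y \<in> BR a" "x \<noteq> y" "gkey x \<noteq> gkey y"
    obtain i where i: "x = Inr (a,i)" "i < d+3" using xy(1) by (auto simp: BR_def)
    obtain j where j: "y = Inr (a,j)" "j < d+3" using xy(2) by (auto simp: BR_def)
    have "{i,j} \<in> J_edges (d+3)" using i j xy(3,4) by (simp add: J_edge_iff gkey_def)
    hence "{(a,i),(a,j)} \<in> copies_E (d+1) (J_edges (d+3))" using that by (simp add: copies_mem)
    thus "{x,y} \<in> Godd_E d" unfolding Godd_E_def i(1) j(1) dunion_mem_r .
  next
    fix x y z assume xyz: "x \<in> BR a" "y \<in> BR a" "z \<in> BR a" "x \<noteq> y" "y \<noteq> z" "x \<noteq> z"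
      "gkey x = gkey y" "gkey y = gkey z"
    obtain i where i: "x = Inr (a,i)" using xyz(1) by (auto simp: BR_def)
    obtain j where j: "y = Inr (a,j)" using xyz(2) by (auto simp: BR_def)
    obtain k where k: "z = Inr (a,k)" using xyz(3) by (auto simp: BR_def)
    show False using no3_div2[of i j k] xyz(4-8) i j k by (simp add: gkey_def)
  qed
  have sub: "S \<subseteq> Godd_V d" using S(1) by (simp add: k_independent_def)
  have SU: "S \<subseteq> (\<Union>a\<in>{..<d+3}. S \<inter> BL a) \<union> (\<Union>a\<in>{..<d+1}. S \<inter> BR a)"
  proof
    fix x assume x: "x \<in> S"
    hence "x \<in> Godd_V d" using sub by blast
    hence "(\<exists>a i. x = Inl (a,i) \<and> a < d+3 \<and> i < d+1) \<or> (\<exists>a i. x = Inr (a,i) \<and> a < d+1 \<and> i < d+3)"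
      by (auto simp: Godd_V_def dunion_V_def copies_V_def J_verts_def)
    thus "x \<in> (\<Union>a\<in>{..<d+3}. S \<inter> BL a) \<union> (\<Union>a\<in>{..<d+1}. S \<inter> BR a)"
    proof
      assume "\<exists>a i. x = Inl (a,i) \<and> a < d+3 \<and> i < d+1"
      then obtain a i where "x = Inl (a,i)" "a < d+3" "i < d+1" by blast
      hence "x \<in> S \<inter> BL a" using x by (simp add: BL_def)
      thus ?thesis using \<open>a < d+3\<close> by blast
    next
      assume "\<exists>a i. x = Inr (a,i) \<and> a < d+1 \<and> i < d+3"
      then obtain a i where "x = Inr (a,i)" "a < d+1" "i < d+3" by blast
      hence "x \<in> S \<inter> BR a" using x by (simp add: BR_def)
      thus ?thesis using \<open>a < d+1\<close> by blast
    qed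
  qed
  have fin: "finite ((\<Union>a\<in>{..<d+3}. S \<inter> BL a) \<union> (\<Union>a\<in>{..<d+1}. S \<inter> BR a))"
    by (simp add: BL_def BR_def)
  have "card S \<le> card ((\<Union>a\<in>{..<d+3}. S \<inter> BL a) \<union> (\<Union>a\<in>{..<d+1}. S \<inter> BR a))"
    by (rule card_mono[OF fin SU])
  also have "\<dots> \<le> card (\<Union>a\<in>{..<d+3}. S \<inter> BL a) + card (\<Union>a\<in>{..<d+1}. S \<inter> BR a)"
    by (rule card_Un_le)
  also have "\<dots> \<le> (\<Sum>a\<in>{..<d+3}. card (S \<inter> BL a)) + (\<Sum>a\<in>{..<d+1}. card (S \<inter> BR a))"
    by (intro add_mono card_UN_le) simp_all
  also have "\<dots> \<le> (\<Sum>a\<in>{..<d+3}. 2) + (\<Sum>a\<in>{..<d+1}. 2)"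
    using L R by (intro add_mono sum_mono) auto
  finally show ?thesis using S(2) by simp
qed



lemma div_le_div: "(0::real) < b \<Longrightarrow> 0 < d \<Longrightarrow> a * d \<le> c * b \<Longrightarrow> a / b \<le> c / d"
  by (simp add: field_simps)

lemma avg_le: assumes "V \<noteq> {}" "finite V" "avg_deg V E \<le> real D"
  shows "2 * card E \<le> D * card V"
proof -
  have n: "real (card V) > 0" using assms(1,2) by (simp add: card_gt_0_iff)
  have "2 * real (card E) / real (card V) \<le> real D" using assms(3) by (simp add: avg_deg_def)
  hence "2 * real (card E) \<le> real D * real (card V)" using n by (simp add: pos_divide_le_eq)
  hence "real (2 * card E) \<le> real (D * card V)" by simp
  thus ?thesis by (simp only: of_nat_le_iff)
qed

lemma low_even: assumes sg: "simple_graph V E" and ne: "V \<noteq> {}" and a: "avg_deg V E \<le> real d"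
  shows "2 / (real d + 2) \<le> real (alpha_k 1 V E) / real (card V)"
proof -
  have n: "real (card V) > 0" using ne sg_finite[OF sg] by (simp add: card_gt_0_iff)
  have "2 * card V \<le> (d+2) * alpha_k 1 V E" using bound_D[OF sg avg_le[OF ne sg_finite[OF sg] a]] .
  hence "real (2 * card V) \<le> real ((d+2) * alpha_k 1 V E)" by (simp only: of_nat_le_iff)
  hence "2 * real (card V) \<le> real (alpha_k 1 V E) * (real d + 2)" by (simp add: algebra_simps)
  moreover have "0 < real d + 2" by simp
  ultimately show ?thesis using n div_le_div by blast
qed

lemma low_odd: assumes sg: "simple_graph V E" and ne: "V \<noteq> {}" and a: "avg_deg V E \<le> real d"
  and od: "odd d"
  shows "2 * (real d + 2) / ((real d + 1) * (real d + 3)) \<le> real (alpha_k 1 V E) / real (card V)"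
proof -
  have n: "real (card V) > 0" using ne sg_finite[OF sg] by (simp add: card_gt_0_iff)
  obtain j where d: "d = 2*j+1" using od oddE by blast
  have "(2*j+3) * card V \<le> 2*(j+1)*(j+2) * alpha_k 1 V E"
    using bound_odd[OF sg] avg_le[OF ne sg_finite[OF sg] a] d by simp
  hence "2*((2*j+3) * card V) \<le> 2*(2*(j+1)*(j+2) * alpha_k 1 V E)" by simp
  moreover have "2*((2*j+3) * card V) = 2*(d+2)*card V" using d by (simp add: algebra_simps)
  moreover have "2*(2*(j+1)*(j+2) * alpha_k 1 V E) = (d+1)*(d+3)*alpha_k 1 V E" using d by (simp add: algebra_simps)
  ultimately have "2*(d+2)*card V \<le> (d+1)*(d+3)*alpha_k 1 V E" by simp
  hence "real (2*(d+2)*card V) \<le> real ((d+1)*(d+3)*alpha_k 1 V E)" by (simp only: of_nat_le_iff)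
  hence "2*(real d+2)*real (card V) \<le> real (alpha_k 1 V E) * ((real d+1)*(real d+3))" by (simp add: algebra_simps)
  moreover have "0 < (real d+1)*(real d+3)" by simp
  ultimately show ?thesis using n div_le_div by blast
qed

lemma part4:
  fixes V :: "'a set"
  assumes sg: "simple_graph V E" and ne: "V \<noteq> {}"
  shows "real (alpha_k 1 V E) \<ge> 2 * real (card V) / (of_int \<lceil>avg_deg V E\<rceil> + 2)"
proof -
  define D where "D = nat \<lceil>avg_deg V E\<rceil>"
  have nn: "avg_deg V E \<ge> 0" by (simp add: avg_deg_def)
  have D: "of_int \<lceil>avg_deg V E\<rceil> = real D" using nn by (simp add: D_def)
  have "avg_deg V E \<le> real D" using D le_of_int_ceiling by metis
  hence "2 * card V \<le> (D+2) * alpha_k 1 V E" using bound_D[OF sg avg_le[OF ne sg_finite[OF sg]]] by blast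
  hence "real (2 * card V) \<le> real ((D+2) * alpha_k 1 V E)" by (simp only: of_nat_le_iff)
  hence "2 * real (card V) \<le> (real D + 2) * real (alpha_k 1 V E)" by (simp add: algebra_simps)
  thus ?thesis unfolding D by (simp add: field_simps)
qed

definition fS :: "nat \<Rightarrow> real set" where
  "fS d = {real (alpha_k 1 V E) / real (card V) | (V :: nat set) (E :: nat set set).
       simple_graph V E \<and> V \<noteq> {} \<and> avg_deg V E \<le> real d}"

lemma f_eq: "f_kd 1 d = Inf (fS d)" by (simp add: f_kd_def fS_def)

lemma fS_bdd: "bdd_below (fS d)"
  unfolding fS_def by (rule bdd_belowI[of _ 0]) auto

definition low :: "nat \<Rightarrow> real" where
  "low d = (if even d then 2 / (real d + 2) else 2 * (real d + 2) / ((real d + 1) * (real d + 3)))"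

lemma low_le: assumes "x \<in> fS d" shows "low d \<le> x"
proof -
  obtain V :: "nat set" and E :: "nat set set" where VE: "x = real (alpha_k 1 V E) / real (card V)" "simple_graph V E" "V \<noteq> {}" "avg_deg V E \<le> real d"
    using assms unfolding fS_def by blast
  show ?thesis
  proof (cases "even d")
    case True thus ?thesis using low_even[OF VE(2-4)] VE(1) by (simp add: low_def)
  next
    case False thus ?thesis using low_odd[OF VE(2-4) False] VE(1) by (simp add: low_def)
  qed
qed

lemma low_ge: "2 / (real d + 2) \<le> low d"
proof -
  have "2 / (real d + 2) \<le> 2 * (real d + 2) / ((real d + 1) * (real d + 3))"
  proof -
    have "2 * ((real d + 1) * (real d + 3)) \<le> 2 * (real d + 2) * (real d + 2)" by (simp add: algebra_simps)
    moreover have "0 < real d + 2" "0 < (real d + 1) * (real d + 3)" by simp_all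
    ultimately show ?thesis using div_le_div by blast
  qed
  thus ?thesis by (simp add: low_def)
qed

lemma f_witness:
  assumes "x \<in> fS d" "x \<le> low d"
  shows "f_kd 1 d = low d" "x = low d"
proof -
  have ne: "fS d \<noteq> {}" using assms by blast
  have "low d \<le> Inf (fS d)" by (rule cInf_greatest[OF ne low_le])
  moreover have "Inf (fS d) \<le> x" by (rule cInf_lower[OF assms(1) fS_bdd])
  ultimately show "f_kd 1 d = low d" "x = low d" using assms(2) f_eq by auto
qed

lemma even_part: assumes "even d"
  shows "simple_graph (J_verts (d+2)) (J_edges (d+2))
      \<and> avg_deg (J_verts (d+2)) (J_edges (d+2)) \<le> real d
      \<and> f_kd 1 d = real (alpha_k 1 (J_verts (d+2)) (J_edges (d+2))) / real (card (J_verts (d+2)))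
      \<and> f_kd 1 d = low d"
proof -
  let ?V = "J_verts (d+2)" and ?E = "J_edges (d+2)"
  have cV: "card ?V = d+2" by (simp add: J_verts_def)
  have "2 * card ?E \<le> (d+2) * (d+2-2)" using J_E2[of "d+2"] assms by simp
  hence "real (2 * card ?E) \<le> real ((d+2) * d)" by (simp only: of_nat_le_iff) simp
  hence "2 * real (card ?E) \<le> (real d + 2) * real d" by (simp add: algebra_simps)
  hence avg: "avg_deg ?V ?E \<le> real d" unfolding avg_deg_def cV by (simp add: field_simps)
  have ne: "?V \<noteq> {}" by (simp add: J_verts_def)
  have mem: "real (alpha_k 1 ?V ?E) / real (card ?V) \<in> fS d"
    unfolding fS_def using J_sg ne avg by blast
  have "real (alpha_k 1 ?V ?E) \<le> 2" using J_alpha by simp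
  hence "real (alpha_k 1 ?V ?E) / real (card ?V) \<le> 2 / real (card ?V)" by (rule divide_right_mono) simp
  moreover have "2 / real (card ?V) = low d" using assms unfolding low_def cV by simp
  ultimately have le: "real (alpha_k 1 ?V ?E) / real (card ?V) \<le> low d" by simp
  show ?thesis using f_witness[OF mem le] J_sg avg by simp
qed

lemma odd_part: assumes "odd d"
  shows "simple_graph (Godd_V d) (Godd_E d)
      \<and> avg_deg (Godd_V d) (Godd_E d) \<le> real d
      \<and> f_kd 1 d = real (alpha_k 1 (Godd_V d) (Godd_E d)) / real (card (Godd_V d))
      \<and> f_kd 1 d = low d"
proof -
  let ?V = "Godd_V d" and ?E = "Godd_E d"
  let ?V' = "to_nat ` ?V" and ?E' = "(`) to_nat ` ?E"
  have inj: "inj (to_nat :: ((nat \<times> nat) + (nat \<times> nat)) \<Rightarrow> nat)" by simp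
  note tr = transport[OF Godd_sg inj]
  have cV: "card ?V = 2*(d+1)*(d+3)" by (rule Godd_cardV)
  have "card ?V > 0" unfolding cV by simp
  hence npos: "real (card ?V) > 0" by simp
  have "real (2 * card ?E) \<le> real (d * card ?V)" using Godd_E2[OF assms] by (simp only: of_nat_le_iff)
  hence "2 * real (card ?E) \<le> real d * real (card ?V)" by simp
  hence avg: "avg_deg ?V ?E \<le> real d" unfolding avg_deg_def using npos by (simp add: pos_divide_le_eq)
  have avg': "avg_deg ?V' ?E' \<le> real d" using avg tr(2,3) by (simp add: avg_deg_def)
  have ne: "?V' \<noteq> {}" using cV by auto
  have mem: "real (alpha_k 1 ?V' ?E') / real (card ?V') \<in> fS d"
    unfolding fS_def using tr(1) ne avg' by blast
  have al: "real (alpha_k 1 ?V' ?E') \<le> real (alpha_k 1 ?V ?E)" using tr(4) by simp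
  have al2: "real (alpha_k 1 ?V ?E) \<le> 4 * real d + 8" using Godd_alpha[of d] by simp
  have lowv: "(4 * real d + 8) / real (card ?V) = low d"
  proof -
    have p1: "real (card ?V) \<noteq> 0" using npos by simp
    have p2: "(real d + 1) * (real d + 3) \<noteq> 0" by (simp add: add_pos_pos)
    have "(4 * real d + 8) * ((real d + 1) * (real d + 3)) = 2 * (real d + 2) * real (card ?V)"
      unfolding cV by (simp add: algebra_simps)
    hence "(4 * real d + 8) / real (card ?V) = 2 * (real d + 2) / ((real d + 1) * (real d + 3))"
      using frac_eq_eq[OF p1 p2] by simp
    thus ?thesis using assms by (simp add: low_def)
  qed
  have le1: "real (alpha_k 1 ?V' ?E') / real (card ?V') \<le> real (alpha_k 1 ?V ?E) / real (card ?V)"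
    using al tr(2) by (simp add: divide_right_mono)
  have le2: "real (alpha_k 1 ?V ?E) / real (card ?V) \<le> low d"
    using al2 npos lowv by (metis divide_right_mono less_imp_le)
  have f: "f_kd 1 d = low d" and x: "real (alpha_k 1 ?V' ?E') / real (card ?V') = low d"
    using f_witness[OF mem order_trans[OF le1 le2]] by auto
  have "real (alpha_k 1 ?V ?E) / real (card ?V) = low d" using le1 le2 x by linarith
  thus ?thesis using f Godd_sg avg by simp
qed

theorem mainTheorem6:
  fixes d :: nat
  shows "(even d \<longrightarrow> f_kd 1 d = 2 / (real d + 2))
       \<and> (odd d \<longrightarrow> f_kd 1 d = 2 * (real d + 2) / ((real d + 1) * (real d + 3)))
       \<and> (even d \<longrightarrow> simple_graph (J_verts (d+2)) (J_edges (d+2))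
              \<and> avg_deg (J_verts (d+2)) (J_edges (d+2)) \<le> real d
              \<and> f_kd 1 d = real (alpha_k 1 (J_verts (d+2)) (J_edges (d+2))) / real (card (J_verts (d+2))))
       \<and> (odd d \<longrightarrow> simple_graph (Godd_V d) (Godd_E d)
              \<and> avg_deg (Godd_V d) (Godd_E d) \<le> real d
              \<and> f_kd 1 d = real (alpha_k 1 (Godd_V d) (Godd_E d)) / real (card (Godd_V d)))
       \<and> f_kd 1 d \<ge> 2 / (real d + 2)
       \<and> (\<forall>(V :: 'a set) E. simple_graph V E \<and> V \<noteq> {} \<longrightarrow>
             real (alpha_k 1 V E) \<ge> 2 * real (card V) / (of_int \<lceil>avg_deg V E\<rceil> + 2))"
proof -
  have p4: "\<forall>(V :: 'a set) E. simple_graph V E \<and> V \<noteq> {} \<longrightarrow>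
             real (alpha_k 1 V E) \<ge> 2 * real (card V) / (of_int \<lceil>avg_deg V E\<rceil> + 2)"
    using part4 by blast
  show ?thesis
  proof (cases "even d")
    case True
    note e = even_part[OF True]
    have lv: "low d = 2 / (real d + 2)" using True by (simp add: low_def)
    have fl: "f_kd 1 d = 2 / (real d + 2)" using e lv by simp
    have ge: "f_kd 1 d \<ge> 2 / (real d + 2)" using fl by simp
    show ?thesis using True e fl ge p4 by blast
  next
    case False
    note e = odd_part[OF False]
    have lv: "low d = 2 * (real d + 2) / ((real d + 1) * (real d + 3))" using False by (simp add: low_def)
    have fl: "f_kd 1 d = 2 * (real d + 2) / ((real d + 1) * (real d + 3))" using e lv by simp
    have ge: "f_kd 1 d \<ge> 2 / (real d + 2)" using e low_ge[of d] by simp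
    show ?thesis using False e fl ge p4 by blast
  qed
qed

end
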